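(* Let $\mathsf K_{\rm c}\in[\mathsf K]$, $\mathsf m\in[\mathsf N_{\rm r}]$ and $\mathsf M=\frac{\mathsf K}{\mathsf N}(\mathsf N-\mathsf N_{\rm r}+\mathsf m)$. For any linear-coding based scheme for the non-secure distributed linearly separable computation problem with parameters $(\mathsf K,\mathsf N,\mathsf N_{\rm r},\mathsf K_{\rm c},\mathsf M)$, there exists a secure scheme (satisfying the security constraint) with the same assignment and without increasing the communication cost.
   Context: Setting: positive integers $\mathsf K,\mathsf N,\mathsf N_{\rm r}$ with $\mathsf N_{\rm r}\le\mathsf N$, $\mathsf N\mid\mathsf K$; a finite field $\mathbb F_{\mathsf q}$ ($\mathsf q$ a sufficiently large prime power) and integer $\mathsf L$. Messages $W_1,\dots,W_{\mathsf K}$ are independent, each uniform over $\mathbb F_{\mathsf q}^{\mathsf L}$ ($W_k$ is a function of dataset $D_k$). The user wants $\mathbf G[W_1;\dots;W_{\mathsf K}]$ for a given $\mathsf K_{\rm c}\times\mathsf K$ matrix $\mathbf G$ over $\mathbb F_{\mathsf q}$. Non-secure problem: an assignment $\mathcal Z_n\subseteq[\mathsf K]$, $|\mathcal Z_n|\le\mathsf M$, for each server $n\in[\mathsf N]$; server $n$ sends $X_n\in\mathbb F_{\mathsf q}^{\mathsf T_n}$, a function of $\{W_k:k\in\mathcal Z_n\}$; for every $\mathcal A\subseteq[\mathsf N]$ with $|\mathcal A|=\mathsf N_{\rm r}$ the user can compute $\mathbf G[W_1;\dots;W_{\mathsf K}]$ from $\{X_n:n\in\mathcal A\}$. Communication cost: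 $\max_{|\mathcal A|=\mathsf N_{\rm r}}\sum_{n\in\mathcal A}\mathsf T_n/\mathsf L$. A scheme is linear-coding based if, for some $\ell$ dividing $\mathsf L$, each $W_k$ is split into $\ell$ equal-length sub-messages $W_{k,1},\dots,W_{k,\ell}\in\mathbb F_{\mathsf q}^{\mathsf L/\ell}$, each server $n$ sends $\ell\mathsf T_n/\mathsf L$ linear combinations (with fixed coefficients in $\mathbb F_{\mathsf q}$) of the sub-messages $W_{k,j}$, $k\in\mathcal Z_n$, and decoding is linear. A secure scheme additionally uses a random variable $Q$ independent of the datasets, given to all servers but not to the user, with $X_n$ a function of $(\{W_k:k\in\mathcal Z_n\},Q)$, the same decodability requirement (the user does not know $Q$), and the security constraint $I(W_1,\dots,W_{\mathsf K};X_1,\dots,X_{\mathsf N}\mid\mathbf G[W_1;\dots;W_{\mathsf K}])=0$. *)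

theory Defs
  imports "HOL-Probability.Probability"
begin

(* Messages W_1..W_K, each in F^L, are encoded as w :: nat => nat => 'f,
   w k p = p-th symbol of W_{k+1}  (0-based: k < K, p < L); entries outside are 0. *)
type_synonym 'f msgs = "nat \<Rightarrow> nat \<Rightarrow> 'f"

definition msg_space :: "nat \<Rightarrow> nat \<Rightarrow> ('f::zero) msgs set" where
  "msg_space K L = {w. \<forall>k j. (K \<le> k \<or> L \<le> j) \<longrightarrow> w k j = 0}"

definition restrict_msgs :: "nat \<Rightarrow> nat \<Rightarrow> ('f::zero) msgs \<Rightarrow> 'f msgs" where
  "restrict_msgs K L w = (\<lambda>k j. if k < K \<and> j < L then w k j else 0)"

definition Gprod :: "nat \<Rightarrow> nat \<Rightarrow> nat \<Rightarrow> (nat \<Rightarrow> nat \<Rightarrow> 'f::comm_ring_1) \<Rightarrow> 'f msgs \<Rightarrow> nat \<Rightarrow> nat \<Rightarrow> 'f" where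
  "Gprod K Kc L G w = (\<lambda>i p. if i < Kc \<and> p < L then (\<Sum>k<K. G i k * w k p) else 0)"

definition valid_assignment :: "nat \<Rightarrow> nat \<Rightarrow> nat \<Rightarrow> (nat \<Rightarrow> nat set) \<Rightarrow> bool" where
  "valid_assignment K N M Z \<longleftrightarrow> (\<forall>n<N. Z n \<subseteq> {..<K} \<and> card (Z n) \<le> M)"

definition comm_cost :: "nat \<Rightarrow> nat \<Rightarrow> (nat \<Rightarrow> nat) \<Rightarrow> nat \<Rightarrow> real" where
  "comm_cost N Nr T L = Max {(\<Sum>n\<in>A. real (T n)) / real L | A. A \<subseteq> {..<N} \<and> card A = Nr}"

(* Linear-coding based scheme: each W_k is split into l sub-messages of length L/l,
   W_{k,j} = symbols j*(L div l) .. (j+1)*(L div l) - 1 of W_k (j < l).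
   Server n sends t n linear combinations (coefficients c n r k j, r < t n) of the
   sub-messages, i.e. T_n = t n * (L div l) symbols; symbol s = r*(L div l) + p. *)
definition lin_tx :: "nat \<Rightarrow> nat \<Rightarrow> nat \<Rightarrow> (nat \<Rightarrow> nat) \<Rightarrow>
    (nat \<Rightarrow> nat \<Rightarrow> nat \<Rightarrow> nat \<Rightarrow> 'f::comm_ring_1) \<Rightarrow> nat \<Rightarrow> 'f msgs \<Rightarrow> nat \<Rightarrow> 'f" where
  "lin_tx K L l t c n w s =
     (if s < t n * (L div l) then
        (\<Sum>k<K. \<Sum>j<l. c n (s div (L div l)) k j * w k (j * (L div l) + s mod (L div l)))
      else 0)"

definition linear_scheme :: "nat \<Rightarrow> nat \<Rightarrow> nat \<Rightarrow> nat \<Rightarrow> nat \<Rightarrow> nat \<Rightarrow>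
    (nat \<Rightarrow> nat \<Rightarrow> 'f::comm_ring_1) \<Rightarrow> (nat \<Rightarrow> nat set) \<Rightarrow> nat \<Rightarrow> (nat \<Rightarrow> nat) \<Rightarrow>
    (nat \<Rightarrow> nat \<Rightarrow> nat \<Rightarrow> nat \<Rightarrow> 'f) \<Rightarrow> (nat set \<Rightarrow> nat \<Rightarrow> nat \<Rightarrow> nat \<Rightarrow> nat \<Rightarrow> 'f) \<Rightarrow> bool" where
  "linear_scheme K N Nr Kc M L G Z l t c e \<longleftrightarrow>
     0 < l \<and> l dvd L \<and> valid_assignment K N M Z \<and>
     (\<forall>n r k j. k \<notin> Z n \<longrightarrow> c n r k j = 0) \<and>
     (\<forall>A. A \<subseteq> {..<N} \<and> card A = Nr \<longrightarrow>
        (\<forall>w\<in>msg_space K L. \<forall>i<Kc. \<forall>p<L.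
           (\<Sum>k<K. G i k * w k p) =
           (\<Sum>n\<in>A. \<Sum>s < t n * (L div l). e A i p n s * lin_tx K L l t c n w s)))"

definition lin_lengths :: "nat \<Rightarrow> nat \<Rightarrow> (nat \<Rightarrow> nat) \<Rightarrow> nat \<Rightarrow> nat" where
  "lin_lengths L l t n = t n * (L div l)"

definition secure_scheme :: "nat \<Rightarrow> nat \<Rightarrow> nat \<Rightarrow> nat \<Rightarrow> nat \<Rightarrow> nat \<Rightarrow>
    (nat \<Rightarrow> nat \<Rightarrow> 'f::{finite,field}) \<Rightarrow> (nat \<Rightarrow> nat set) \<Rightarrow> (nat \<Rightarrow> nat) \<Rightarrow>
    (nat \<Rightarrow> 'f msgs \<Rightarrow> 'q \<Rightarrow> nat \<Rightarrow> 'f) \<Rightarrow> 'q pmf \<Rightarrow> bool" where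
  "secure_scheme K N Nr Kc M L G Z T enc Qd \<longleftrightarrow>
     valid_assignment K N M Z \<and>
     (\<forall>n<N. \<forall>w w' q. (\<forall>k\<in>Z n. w k = w' k) \<longrightarrow> enc n w q = enc n w' q) \<and>
     (\<forall>n<N. \<forall>w q s. T n \<le> s \<longrightarrow> enc n w q s = 0) \<and>
     (\<forall>A. A \<subseteq> {..<N} \<and> card A = Nr \<longrightarrow>
        (\<exists>dec :: (nat \<Rightarrow> nat \<Rightarrow> 'f) \<Rightarrow> 'f msgs.
           \<forall>w\<in>msg_space K L. \<forall>q\<in>set_pmf Qd.
             dec (\<lambda>n. if n \<in> A then enc n w q else (\<lambda>_. 0)) = Gprod K Kc L G w)) \<and>
     (let P = measure_pmf (pair_pmf (pmf_of_set (msg_space K L)) Qd);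
          Wv = (\<lambda>\<omega>. restrict_msgs K L (fst \<omega>));
          Xv = (\<lambda>\<omega>. \<lambda>n. if n < N then enc n (fst \<omega>) (snd \<omega>) else (\<lambda>_. 0));
          Gv = (\<lambda>\<omega>. Gprod K Kc L G (fst \<omega>))
      in prob_space.conditional_mutual_information P 2
           (count_space (Wv ` space P)) (count_space (Xv ` space P)) (count_space (Gv ` space P))
           Wv Xv Gv = 0)"

end

theory Submission imports Defs begin
lemma pair_prod:
  "measure (pair_pmf M N) (A \<times> B) = measure M A * measure N B"
proof -
  have "measure (pair_pmf M N) (A \<times> B) = measure (pair_pmf M N) ((A \<times> B) \<inter> set_pmf (pair_pmf M N))"
    by (rule measure_Int_set_pmf[symmetric])
  also have "(A \<times> B) \<inter> set_pmf (pair_pmf M N) = (A \<inter> set_pmf M) \<times> (B \<inter> set_pmf N)" by auto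
  also have "measure (pair_pmf M N) \<dots> = measure M (A \<inter> set_pmf M) * measure N (B \<inter> set_pmf N)"
    by (rule measure_pmf_prob_product) auto
  finally show ?thesis by (simp add: measure_Int_set_pmf)
qed

lemma finite_msg_space: "finite (msg_space A B :: ('f::{finite,zero}) msgs set)"
proof -
  let ?f = "\<lambda>u::'f msgs. \<lambda>x\<in>{..<A}\<times>{..<B}. u (fst x) (snd x)"
  have inj: "inj_on ?f (msg_space A B)"
  proof (rule inj_onI)
    fix u v assume u: "u \<in> msg_space A B" and v: "v \<in> msg_space A B" and e: "?f u = ?f v"
    show "u = v"
    proof (intro ext)
      fix k j
      show "u k j = v k j"
      proof (cases "k < A \<and> j < B")
        case True then show ?thesis using fun_cong[OF e, of "(k,j)"] by simp
      next
        case False then show ?thesis using u v unfolding msg_space_def by auto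
      qed
    qed
  qed
  have "?f ` msg_space A B \<subseteq> ({..<A}\<times>{..<B}) \<rightarrow>\<^sub>E (UNIV :: 'f set)" by (auto simp: PiE_def extensional_def)
  then have "finite (?f ` msg_space A B)" by (rule finite_subset) (intro finite_PiE, auto)
  then show ?thesis using inj finite_imageD by blast
qed
lemma cmi_zero_pmf:
  fixes p :: "'a pmf" and W :: "'a \<Rightarrow> 'w" and X :: "'a \<Rightarrow> 'x" and Z :: "'a \<Rightarrow> 'z"
  assumes fW: "finite (range W)" and fX: "finite (range X)" and fZ: "finite (range Z)"
  and ci: "\<And>x y z. measure p {\<omega>. W \<omega> = x \<and> X \<omega> = y \<and> Z \<omega> = z} * measure p {\<omega>. Z \<omega> = z}
     = measure p {\<omega>. W \<omega> = x \<and> Z \<omega> = z} * measure p {\<omega>. X \<omega> = y \<and> Z \<omega> = z}"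
  shows "prob_space.conditional_mutual_information (measure_pmf p) 2
     (count_space (W ` space (measure_pmf p))) (count_space (X ` space (measure_pmf p)))
     (count_space (Z ` space (measure_pmf p))) W X Z = 0"
proof -
  have info: "information_space (measure_pmf p) 2"
    by (intro information_space.intro prob_space_measure_pmf) (unfold_locales, simp)
  have sf: "simple_function (measure_pmf p) f" if "finite (range f)" for f :: "'a \<Rightarrow> 'b"
    using that unfolding simple_function_def by simp
  have sfW: "simple_function (measure_pmf p) W" using sf fW .
  have sfX: "simple_function (measure_pmf p) X" using sf fX .
  have sfZ: "simple_function (measure_pmf p) Z" using sf fZ .
  note sd = measure_pmf.simple_distributedI[OF _ _ refl]
  let ?Pz = "\<lambda>z. measure p (Z -` {z} \<inter> space (measure_pmf p))"
  let ?Pyz = "\<lambda>yz. measure p ((\<lambda>x. (X x, Z x)) -` {yz} \<inter> space (measure_pmf p))"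
  let ?Pxz = "\<lambda>xz. measure p ((\<lambda>x. (W x, Z x)) -` {xz} \<inter> space (measure_pmf p))"
  let ?Pxyz = "\<lambda>xyz. measure p ((\<lambda>x. (W x, X x, Z x)) -` {xyz} \<inter> space (measure_pmf p))"
  have "prob_space.conditional_mutual_information (measure_pmf p) 2 (count_space (W ` space (measure_pmf p))) (count_space (X ` space (measure_pmf p))) (count_space (Z ` space (measure_pmf p))) W X Z = (\<Sum>(x, y, z)\<in>(\<lambda>x. (W x, X x, Z x))`space (measure_pmf p).
      ?Pxyz (x, y, z) * log 2 (?Pxyz (x, y, z) / (?Pxz (x, z) * (?Pyz (y,z) / ?Pz z))))"
    apply (rule information_space.conditional_mutual_information_eq[OF info])
    by (rule sd, intro simple_function_Pair sfW sfX sfZ, rule measure_nonneg)+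
  also have "\<dots> = 0"
  proof (rule sum.neutral, safe)
    fix x y z
    have e1: "?Pxyz (x,y,z) = measure p {\<omega>. W \<omega> = x \<and> X \<omega> = y \<and> Z \<omega> = z}"
      by (auto intro!: arg_cong[where f="measure p"])
    have e2: "?Pxz (x,z) = measure p {\<omega>. W \<omega> = x \<and> Z \<omega> = z}"
      by (auto intro!: arg_cong[where f="measure p"])
    have e3: "?Pyz (y,z) = measure p {\<omega>. X \<omega> = y \<and> Z \<omega> = z}"
      by (auto intro!: arg_cong[where f="measure p"])
    have e4: "?Pz z = measure p {\<omega>. Z \<omega> = z}"
      by (auto intro!: arg_cong[where f="measure p"])
    have m1: "measure p {\<omega>. W \<omega> = x \<and> X \<omega> = y \<and> Z \<omega> = z} \<le> measure p {\<omega>. W \<omega> = x \<and> Z \<omega> = z}"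
      by (rule measure_pmf.finite_measure_mono) auto
    have m2: "measure p {\<omega>. W \<omega> = x \<and> X \<omega> = y \<and> Z \<omega> = z} \<le> measure p {\<omega>. X \<omega> = y \<and> Z \<omega> = z}"
      by (rule measure_pmf.finite_measure_mono) auto
    have m3: "measure p {\<omega>. W \<omega> = x \<and> X \<omega> = y \<and> Z \<omega> = z} \<le> measure p {\<omega>. Z \<omega> = z}"
      by (rule measure_pmf.finite_measure_mono) auto
    show "?Pxyz (x, y, z) * log 2 (?Pxyz (x, y, z) / (?Pxz (x, z) * (?Pyz (y,z) / ?Pz z))) = 0"
    proof (cases "measure p {\<omega>. W \<omega> = x \<and> X \<omega> = y \<and> Z \<omega> = z} = 0")
      case False
      let ?a = "measure p {\<omega>. W \<omega> = x \<and> X \<omega> = y \<and> Z \<omega> = z}"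
      let ?b = "measure p {\<omega>. W \<omega> = x \<and> Z \<omega> = z}"
      let ?c = "measure p {\<omega>. X \<omega> = y \<and> Z \<omega> = z}"
      let ?d = "measure p {\<omega>. Z \<omega> = z}"
      have a0: "?a > 0" using False measure_nonneg[of p] by (simp add: order_less_le)
      have d0: "?d > 0" using a0 m3 by linarith
      have cc: "?a * ?d = ?b * ?c" by (rule ci)
      have "?b * (?c / ?d) = (?b * ?c) / ?d" by simp
      also have "\<dots> = (?a * ?d) / ?d" using cc by simp
      also have "\<dots> = ?a" using d0 by simp
      finally have "?b * (?c / ?d) = ?a" .
      then have "?a / (?b * (?c / ?d)) = 1" using a0 by simp
      then have "?a * log 2 (?a / (?b * (?c / ?d))) = 0" by (simp only: log_one mult_zero_right)
      then show ?thesis unfolding e1 e2 e3 e4 .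
    next
      case True
      then show ?thesis unfolding e1 by (simp only: mult_zero_left)
    qed
  qed
  finally show ?thesis .
qed

lemma ci_pmf:
  fixes p :: "'a pmf" and W :: "'a \<Rightarrow> 'w" and X :: "'a \<Rightarrow> 'x" and g :: "'w \<Rightarrow> 'z"
    and k :: "'w \<Rightarrow> 'x \<Rightarrow> real"
  assumes fW: "finite (range W)"
  and kk: "\<And>w y. measure p {\<omega>. W \<omega> = w \<and> X \<omega> = y} = measure p {\<omega>. W \<omega> = w} * k w y"
  and kc: "\<And>w w' y. measure p {\<omega>. W \<omega> = w} \<noteq> 0 \<Longrightarrow> measure p {\<omega>. W \<omega> = w'} \<noteq> 0 \<Longrightarrow>
              g w = g w' \<Longrightarrow> k w y = k w' y"
  shows "measure p {\<omega>. W \<omega> = x \<and> X \<omega> = y \<and> g (W \<omega>) = z} * measure p {\<omega>. g (W \<omega>) = z}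
       = measure p {\<omega>. W \<omega> = x \<and> g (W \<omega>) = z} * measure p {\<omega>. X \<omega> = y \<and> g (W \<omega>) = z}"
proof (cases "g x = z")
  case False
  then have "{\<omega>. W \<omega> = x \<and> X \<omega> = y \<and> g (W \<omega>) = z} = {}" "{\<omega>. W \<omega> = x \<and> g (W \<omega>) = z} = {}"
    by auto
  then show ?thesis by (simp only: measure_empty mult_zero_left)
next
  case True
  have s1: "{\<omega>. W \<omega> = x \<and> X \<omega> = y \<and> g (W \<omega>) = z} = {\<omega>. W \<omega> = x \<and> X \<omega> = y}"
    "{\<omega>. W \<omega> = x \<and> g (W \<omega>) = z} = {\<omega>. W \<omega> = x}" using True by auto
  show ?thesis
  proof (cases "measure p {\<omega>. W \<omega> = x} = 0")
    case True
    then show ?thesis unfolding s1 kk by simp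
  next
    case nz: False
    define R where "R = {w \<in> range W. g w = z}"
    have fR: "finite R" using fW unfolding R_def by simp
    have disj: "disjoint_family_on (\<lambda>w. {\<omega>. W \<omega> = w \<and> X \<omega> = y}) R"
      "disjoint_family_on (\<lambda>w. {\<omega>. W \<omega> = w}) R"
      unfolding disjoint_family_on_def by auto
    have u1: "{\<omega>. X \<omega> = y \<and> g (W \<omega>) = z} = (\<Union>w\<in>R. {\<omega>. W \<omega> = w \<and> X \<omega> = y})"
      unfolding R_def by auto
    have u2: "{\<omega>. g (W \<omega>) = z} = (\<Union>w\<in>R. {\<omega>. W \<omega> = w})"
      unfolding R_def by auto
    have "measure p {\<omega>. X \<omega> = y \<and> g (W \<omega>) = z} = (\<Sum>w\<in>R. measure p {\<omega>. W \<omega> = w \<and> X \<omega> = y})"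
      unfolding u1 by (rule measure_pmf.finite_measure_finite_Union[OF fR _ disj(1)]) simp
    also have "\<dots> = (\<Sum>w\<in>R. measure p {\<omega>. W \<omega> = w} * k x y)"
    proof (rule sum.cong[OF refl])
      fix w assume "w \<in> R"
      then have "g w = g x" using True unfolding R_def by simp
      then show "measure p {\<omega>. W \<omega> = w \<and> X \<omega> = y} = measure p {\<omega>. W \<omega> = w} * k x y"
        using kk[of w y] kc[of w x y] nz by (cases "measure p {\<omega>. W \<omega> = w} = 0") auto
    qed
    also have "\<dots> = (\<Sum>w\<in>R. measure p {\<omega>. W \<omega> = w}) * k x y"
      by (simp add: sum_distrib_right)
    also have "(\<Sum>w\<in>R. measure p {\<omega>. W \<omega> = w}) = measure p {\<omega>. g (W \<omega>) = z}"
      unfolding u2 by (rule measure_pmf.finite_measure_finite_Union[OF fR _ disj(2), symmetric]) simp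
    finally show ?thesis unfolding s1 kk by simp
  qed
qed

definition madd :: "('f::plus) msgs \<Rightarrow> 'f msgs \<Rightarrow> 'f msgs" where
  "madd u v = (\<lambda>k p. u k p + v k p)"

definition of_q :: "(nat \<Rightarrow> 'f) \<Rightarrow> 'f msgs" where
  "of_q q = (\<lambda>k p. q (prod_encode (k, p)))"

definition to_q :: "'f msgs \<Rightarrow> nat \<Rightarrow> 'f" where
  "to_q v = (\<lambda>i. v (fst (prod_decode i)) (snd (prod_decode i)))"

lemma of_to_q [simp]: "of_q (to_q v) = v"
  unfolding of_q_def to_q_def by simp

lemma restrict_in: "restrict_msgs K L w \<in> msg_space K L"
  unfolding restrict_msgs_def msg_space_def by auto

lemma restrict_id: "w \<in> msg_space K L \<Longrightarrow> restrict_msgs K L w = w"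
  unfolding restrict_msgs_def msg_space_def by (auto intro!: ext)

lemma Gprod_restrict: "Gprod K Kc L G (restrict_msgs K L w) = Gprod K Kc L G w"
  unfolding Gprod_def restrict_msgs_def by (auto intro!: ext sum.cong)

lemma madd_in: fixes u :: "('f::monoid_add) msgs" shows "u \<in> msg_space K L \<Longrightarrow> v \<in> msg_space K L \<Longrightarrow> madd u v \<in> msg_space K L"
  unfolding madd_def msg_space_def by auto

lemma ker_shift:
  fixes G :: "nat \<Rightarrow> nat \<Rightarrow> 'f::field"
  assumes v: "v \<in> {v \<in> msg_space K L. Gprod K Kc L G v = (\<lambda>i p. 0)}"
    and w: "w \<in> msg_space K L" and w': "w' \<in> msg_space K L"
    and g: "Gprod K Kc L G w = Gprod K Kc L G w'"
  shows "(\<lambda>k p. v k p + w k p - w' k p) \<in> {v \<in> msg_space K L. Gprod K Kc L G v = (\<lambda>i p. 0)}"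
proof -
  have "(\<lambda>k p. v k p + w k p - w' k p) \<in> msg_space K L"
    using v w w' unfolding msg_space_def by auto
  moreover have "Gprod K Kc L G (\<lambda>k p. v k p + w k p - w' k p) = (\<lambda>i p. 0)"
  proof (intro ext)
    fix i p
    show "Gprod K Kc L G (\<lambda>k p. v k p + w k p - w' k p) i p = 0"
    proof (cases "i < Kc \<and> p < L")
      case True
      have a: "(\<Sum>k<K. G i k * v k p) = 0" using fun_cong[OF fun_cong[OF conjunct2[OF v[simplified]]], of i p] True
        unfolding Gprod_def by simp
      have b: "(\<Sum>k<K. G i k * w k p) = (\<Sum>k<K. G i k * w' k p)" using fun_cong[OF fun_cong[OF g], of i p] True
        unfolding Gprod_def by simp
      have "(\<Sum>k<K. G i k * (v k p + w k p - w' k p)) =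
            (\<Sum>k<K. G i k * v k p) + (\<Sum>k<K. G i k * w k p) - (\<Sum>k<K. G i k * w' k p)"
        by (simp add: algebra_simps sum.distrib sum_subtractf)
      then show ?thesis using a b True unfolding Gprod_def by simp
    next
      case False then show ?thesis unfolding Gprod_def by auto
    qed
  qed
  ultimately show ?thesis by simp
qed

lemma shift_card:
  fixes G :: "nat \<Rightarrow> nat \<Rightarrow> 'f::field" and H :: "'f msgs \<Rightarrow> 'b"
  assumes w: "w \<in> msg_space K L" and w': "w' \<in> msg_space K L"
    and g: "Gprod K Kc L G w = Gprod K Kc L G w'"
  shows "card ({v \<in> msg_space K L. Gprod K Kc L G v = (\<lambda>i p. 0)} \<inter> {v. H (madd w v) = y}) =
         card ({v \<in> msg_space K L. Gprod K Kc L G v = (\<lambda>i p. 0)} \<inter> {v. H (madd w' v) = y})"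
proof (rule bij_betw_same_card[of "\<lambda>v k p. v k p + w k p - w' k p"],
       rule bij_betw_byWitness[where f' = "\<lambda>v k p. v k p + w' k p - w k p"])
  show "\<forall>a\<in>{v \<in> msg_space K L. Gprod K Kc L G v = (\<lambda>i p. 0)} \<inter> {v. H (madd w v) = y}.
          (\<lambda>k p. a k p + w k p - w' k p + w' k p - w k p) = a" by simp
  show "\<forall>a\<in>{v \<in> msg_space K L. Gprod K Kc L G v = (\<lambda>i p. 0)} \<inter> {v. H (madd w' v) = y}.
          (\<lambda>k p. a k p + w' k p - w k p + w k p - w' k p) = a" by simp
  have m1: "madd w' (\<lambda>k p. v k p + w k p - w' k p) = madd w v" for v :: "'f msgs"
    unfolding madd_def by (intro ext) (simp add: algebra_simps)
  have m2: "madd w (\<lambda>k p. v k p + w' k p - w k p) = madd w' v" for v :: "'f msgs"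
    unfolding madd_def by (intro ext) (simp add: algebra_simps)
  show "(\<lambda>v k p. v k p + w k p - w' k p) ` ({v \<in> msg_space K L. Gprod K Kc L G v = (\<lambda>i p. 0)} \<inter> {v. H (madd w v) = y})
      \<subseteq> {v \<in> msg_space K L. Gprod K Kc L G v = (\<lambda>i p. 0)} \<inter> {v. H (madd w' v) = y}"
  proof
    fix u assume "u \<in> (\<lambda>v k p. v k p + w k p - w' k p) ` ({v \<in> msg_space K L. Gprod K Kc L G v = (\<lambda>i p. 0)} \<inter> {v. H (madd w v) = y})"
    then obtain v where v: "v \<in> {v \<in> msg_space K L. Gprod K Kc L G v = (\<lambda>i p. 0)}" "H (madd w v) = y"
      and u: "u = (\<lambda>k p. v k p + w k p - w' k p)" by auto
    show "u \<in> {v \<in> msg_space K L. Gprod K Kc L G v = (\<lambda>i p. 0)} \<inter> {v. H (madd w' v) = y}"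
      using ker_shift[OF v(1) w w' g] v(2) m1[of v] u by simp
  qed
  show "(\<lambda>v k p. v k p + w' k p - w k p) ` ({v \<in> msg_space K L. Gprod K Kc L G v = (\<lambda>i p. 0)} \<inter> {v. H (madd w' v) = y})
      \<subseteq> {v \<in> msg_space K L. Gprod K Kc L G v = (\<lambda>i p. 0)} \<inter> {v. H (madd w v) = y}"
  proof
    fix u assume "u \<in> (\<lambda>v k p. v k p + w' k p - w k p) ` ({v \<in> msg_space K L. Gprod K Kc L G v = (\<lambda>i p. 0)} \<inter> {v. H (madd w' v) = y})"
    then obtain v where v: "v \<in> {v \<in> msg_space K L. Gprod K Kc L G v = (\<lambda>i p. 0)}" "H (madd w' v) = y"
      and u: "u = (\<lambda>k p. v k p + w' k p - w k p)" by auto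
    show "u \<in> {v \<in> msg_space K L. Gprod K Kc L G v = (\<lambda>i p. 0)} \<inter> {v. H (madd w v) = y}"
      using ker_shift[OF v(1) w' w g[symmetric]] v(2) m2[of v] u by simp
  qed
qed

theorem theorem2:
  fixes K N Nr Kc m M L l :: nat
    and G :: "nat \<Rightarrow> nat \<Rightarrow> 'f::{finite,field}"
    and Z :: "nat \<Rightarrow> nat set"
    and t :: "nat \<Rightarrow> nat"
    and c :: "nat \<Rightarrow> nat \<Rightarrow> nat \<Rightarrow> nat \<Rightarrow> 'f"
    and e :: "nat set \<Rightarrow> nat \<Rightarrow> nat \<Rightarrow> nat \<Rightarrow> nat \<Rightarrow> 'f"
  assumes "0 < K" and "0 < L" and "1 \<le> Nr" and "Nr \<le> N" and "N dvd K"
    and "1 \<le> Kc" and "Kc \<le> K"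
    and "1 \<le> m" and "m \<le> Nr"
    and "M = K div N * (N - Nr + m)"
    and "linear_scheme K N Nr Kc M L G Z l t c e"
  shows "\<exists>(T :: nat \<Rightarrow> nat) (enc :: nat \<Rightarrow> 'f msgs \<Rightarrow> (nat \<Rightarrow> 'f) \<Rightarrow> nat \<Rightarrow> 'f) (Qd :: (nat \<Rightarrow> 'f) pmf).
           secure_scheme K N Nr Kc M L G Z T enc Qd \<and>
           comm_cost N Nr T L \<le> comm_cost N Nr (lin_lengths L l t) L"
proof -
  note LS = assms(11)[unfolded linear_scheme_def]
  have valid: "valid_assignment K N M Z" using LS by blast
  have czero: "\<And>n r k j. k \<notin> Z n \<Longrightarrow> c n r k j = 0" using LS by blast
  have decLS: "\<And>A w i p. A \<subseteq> {..<N} \<Longrightarrow> card A = Nr \<Longrightarrow> w \<in> msg_space K L \<Longrightarrow> i < Kc \<Longrightarrow> p < L \<Longrightarrow>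
           (\<Sum>k<K. G i k * w k p) =
           (\<Sum>n\<in>A. \<Sum>s < t n * (L div l). e A i p n s * lin_tx K L l t c n w s)"
    using LS by blast
  define S :: "'f msgs set" where "S = msg_space K L"
  define Ker where "Ker = {v \<in> S. Gprod K Kc L G v = (\<lambda>i p. 0)}"
  define g where "g = Gprod K Kc L G"
  define T where "T = lin_lengths L l t"
  define enc :: "nat \<Rightarrow> 'f msgs \<Rightarrow> (nat \<Rightarrow> 'f) \<Rightarrow> nat \<Rightarrow> 'f" where
    "enc = (\<lambda>n w q. lin_tx K L l t c n (madd (restrict_msgs K L w) (of_q q)))"
  define Qd where "Qd = map_pmf to_q (pmf_of_set Ker)"
  define F where "F = (\<lambda>w q. \<lambda>n. if n < N then lin_tx K L l t c n (madd w (of_q q)) else (\<lambda>_::nat. 0::'f))"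
  have fS: "finite S" unfolding S_def by (rule finite_msg_space)
  have zS: "(\<lambda>k p. 0) \<in> S" unfolding S_def msg_space_def by simp
  have zK: "(\<lambda>k p. 0) \<in> Ker" unfolding Ker_def using zS by (auto simp: Gprod_def intro!: ext)
  have fK: "finite Ker" using fS unfolding Ker_def by simp
  have neK: "Ker \<noteq> {}" using zK by blast
  have setQd: "set_pmf Qd = to_q ` Ker" unfolding Qd_def using fK neK by simp
  have "secure_scheme K N Nr Kc M L G Z T enc Qd"
    unfolding secure_scheme_def Let_def
  proof (intro conjI allI impI ballI)
    show "valid_assignment K N M Z" by (rule valid)
  next
    fix n and w w' :: "'f msgs" and q assume "n < N" and eq: "\<forall>k\<in>Z n. w k = w' k"
    show "enc n w q = enc n w' q"
      unfolding enc_def lin_tx_def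
    proof (intro ext if_cong refl sum.cong)
      fix s k j assume "k \<in> {..<K}"
      show "c n (s div (L div l)) k j * madd (restrict_msgs K L w) (of_q q) k (j * (L div l) + s mod (L div l)) =
            c n (s div (L div l)) k j * madd (restrict_msgs K L w') (of_q q) k (j * (L div l) + s mod (L div l))"
        using eq czero[of k n] unfolding madd_def restrict_msgs_def by (cases "k \<in> Z n") auto
    qed
  next
    fix n w q s assume "n < N" "T n \<le> s"
    then show "enc n w q s = 0" unfolding enc_def lin_tx_def T_def lin_lengths_def by simp
  next
    fix A assume A: "A \<subseteq> {..<N} \<and> card A = Nr"
    define dec where "dec = (\<lambda>X::nat \<Rightarrow> nat \<Rightarrow> 'f. \<lambda>i p. if i < Kc \<and> p < L then
        (\<Sum>n\<in>A. \<Sum>s < T n. e A i p n s * X n s) else 0)"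
    show "\<exists>dec. \<forall>w\<in>msg_space K L. \<forall>q\<in>set_pmf Qd.
             dec (\<lambda>n. if n \<in> A then enc n w q else (\<lambda>_. 0)) = Gprod K Kc L G w"
    proof (intro exI[of _ dec] ballI)
      fix w :: "'f msgs" and q assume w: "w \<in> msg_space K L" and q: "q \<in> set_pmf Qd"
      then obtain v where v: "v \<in> Ker" and qv: "q = to_q v" using setQd by auto
      have vS: "v \<in> msg_space K L" using v unfolding Ker_def S_def by simp
      have vG: "Gprod K Kc L G v = (\<lambda>i p. 0)" using v unfolding Ker_def by simp
      have encv: "enc n w q = lin_tx K L l t c n (madd w v)" for n
        unfolding enc_def qv using restrict_id[OF w] by simp
      show "dec (\<lambda>n. if n \<in> A then enc n w q else (\<lambda>_. 0)) = Gprod K Kc L G w"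
      proof (intro ext)
        fix i p
        show "dec (\<lambda>n. if n \<in> A then enc n w q else (\<lambda>_. 0)) i p = Gprod K Kc L G w i p"
        proof (cases "i < Kc \<and> p < L")
          case True
          have "dec (\<lambda>n. if n \<in> A then enc n w q else (\<lambda>_. 0)) i p =
                (\<Sum>n\<in>A. \<Sum>s < t n * (L div l). e A i p n s * lin_tx K L l t c n (madd w v) s)"
            unfolding dec_def T_def lin_lengths_def using True by (simp add: encv)
          also have "\<dots> = (\<Sum>k<K. G i k * madd w v k p)"
            using decLS[of A "madd w v" i p] A True madd_in[OF w vS] by simp
          also have "\<dots> = (\<Sum>k<K. G i k * w k p) + (\<Sum>k<K. G i k * v k p)"
            unfolding madd_def by (simp add: algebra_simps sum.distrib)
          also have "(\<Sum>k<K. G i k * v k p) = 0"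
            using fun_cong[OF fun_cong[OF vG], of i p] True unfolding Gprod_def by simp
          finally show ?thesis using True unfolding Gprod_def by simp
        next
          case False then show ?thesis unfolding dec_def Gprod_def by auto
        qed
      qed
    qed
  next
    let ?W = "\<lambda>\<omega>::'f msgs \<times> (nat \<Rightarrow> 'f). restrict_msgs K L (fst \<omega>)"
    let ?P = "pair_pmf (pmf_of_set (msg_space K L)) Qd"
    have Xeq: "(\<lambda>\<omega>::'f msgs \<times> (nat \<Rightarrow> 'f). \<lambda>n. if n < N then enc n (fst \<omega>) (snd \<omega>) else (\<lambda>_. 0))
        = (\<lambda>\<omega>. F (?W \<omega>) (snd \<omega>))"
      unfolding F_def enc_def by (intro ext) simp
    have Zeq: "(\<lambda>\<omega>::'f msgs \<times> (nat \<Rightarrow> 'f). Gprod K Kc L G (fst \<omega>)) = (\<lambda>\<omega>. g (?W \<omega>))"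
      unfolding g_def by (simp add: Gprod_restrict)
    define B where "B = (\<Sum>n<N. T n)"
    have FB: "F w q \<in> msg_space N B" for w q
      unfolding F_def msg_space_def mem_Collect_eq
    proof (intro allI impI)
      fix n s assume "N \<le> n \<or> B \<le> s"
      moreover have "n < N \<Longrightarrow> T n \<le> B" unfolding B_def
        by (rule member_le_sum) auto
      ultimately show "(if n < N then lin_tx K L l t c n (madd w (of_q q)) else (\<lambda>_. 0)) s = 0"
        unfolding lin_tx_def T_def lin_lengths_def by auto
    qed
    have kk: "measure ?P {\<omega>. ?W \<omega> = w \<and> F (?W \<omega>) (snd \<omega>) = y} =
              measure ?P {\<omega>. ?W \<omega> = w} * measure Qd {q. F w q = y}" for w y
    proof -
      have "{\<omega>. ?W \<omega> = w \<and> F (?W \<omega>) (snd \<omega>) = y} = {a. restrict_msgs K L a = w} \<times> {q. F w q = y}"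
        by auto
      moreover have "{\<omega>. ?W \<omega> = w} = {a. restrict_msgs K L a = w} \<times> UNIV" by auto
      ultimately show ?thesis by (simp add: pair_prod)
    qed
    have inS: "w \<in> msg_space K L" if "measure ?P {\<omega>. ?W \<omega> = w} \<noteq> 0" for w
    proof (rule ccontr)
      assume "w \<notin> msg_space K L"
      then have "{\<omega>. ?W \<omega> = w} = {}" using restrict_in[of K L] by auto
      then show False using that by simp
    qed
    have kc: "measure Qd {q. F w q = y} = measure Qd {q. F w' q = y}"
      if "measure ?P {\<omega>. ?W \<omega> = w} \<noteq> 0" "measure ?P {\<omega>. ?W \<omega> = w'} \<noteq> 0" "g w = g w'" for w w' y
    proof -
      have w: "w \<in> msg_space K L" and w': "w' \<in> msg_space K L" using inS that by auto
      have e: "F u (to_q v) = (\<lambda>n. if n < N then lin_tx K L l t c n (madd u v) else (\<lambda>_. 0))" for u v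
        unfolding F_def by (subst of_to_q) (rule refl)
      have "measure Qd {q. F w q = y} = real (card (Ker \<inter> {v. (\<lambda>n. if n < N then lin_tx K L l t c n (madd w v) else (\<lambda>_. 0)) = y})) / real (card Ker)"
        unfolding Qd_def by (simp add: measure_pmf_of_set[OF neK fK] vimage_def e)
      also have "card (Ker \<inter> {v. (\<lambda>n. if n < N then lin_tx K L l t c n (madd w v) else (\<lambda>_. 0)) = y})
          = card (Ker \<inter> {v. (\<lambda>n. if n < N then lin_tx K L l t c n (madd w' v) else (\<lambda>_. 0)) = y})"
        unfolding Ker_def S_def
        by (rule shift_card[OF w w' that(3)[unfolded g_def]])
      also have "real (card (Ker \<inter> {v. (\<lambda>n. if n < N then lin_tx K L l t c n (madd w' v) else (\<lambda>_. 0)) = y})) / real (card Ker)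
          = measure Qd {q. F w' q = y}"
        unfolding Qd_def by (simp add: measure_pmf_of_set[OF neK fK] vimage_def e)
      finally show ?thesis .
    qed
    have "prob_space.conditional_mutual_information (measure_pmf ?P) 2
     (count_space (?W ` space (measure_pmf ?P)))
     (count_space ((\<lambda>\<omega>. F (?W \<omega>) (snd \<omega>)) ` space (measure_pmf ?P)))
     (count_space ((\<lambda>\<omega>. g (?W \<omega>)) ` space (measure_pmf ?P)))
     ?W (\<lambda>\<omega>. F (?W \<omega>) (snd \<omega>)) (\<lambda>\<omega>. g (?W \<omega>)) = 0"
    proof (rule cmi_zero_pmf)
      show "finite (range ?W)"
        by (rule finite_subset[OF _ finite_msg_space[of K L]]) (auto intro: restrict_in)
      show "finite (range (\<lambda>\<omega>. F (?W \<omega>) (snd \<omega>)))"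
        by (rule finite_subset[OF _ finite_msg_space[of N B]]) (auto intro: FB)
      show "finite (range (\<lambda>\<omega>. g (?W \<omega>)))"
        by (rule finite_subset[OF _ finite_msg_space[of Kc L]]) (auto simp: g_def Gprod_def msg_space_def)
      fix x y z
      show "measure ?P {\<omega>. ?W \<omega> = x \<and> F (?W \<omega>) (snd \<omega>) = y \<and> g (?W \<omega>) = z} * measure ?P {\<omega>. g (?W \<omega>) = z}
         = measure ?P {\<omega>. ?W \<omega> = x \<and> g (?W \<omega>) = z} * measure ?P {\<omega>. F (?W \<omega>) (snd \<omega>) = y \<and> g (?W \<omega>) = z}"
        by (rule ci_pmf[where W = ?W and X = "\<lambda>\<omega>. F (?W \<omega>) (snd \<omega>)" and g = g
              and k = "\<lambda>w y. measure Qd {q. F w q = y}"])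
           (auto intro: finite_subset[OF _ finite_msg_space[of K L]] restrict_in kk kc)
    qed
    then show "prob_space.conditional_mutual_information (measure_pmf (pair_pmf (pmf_of_set (msg_space K L)) Qd)) 2
     (count_space ((\<lambda>\<omega>. restrict_msgs K L (fst \<omega>)) ` space (measure_pmf (pair_pmf (pmf_of_set (msg_space K L)) Qd))))
     (count_space ((\<lambda>\<omega>. \<lambda>n. if n < N then enc n (fst \<omega>) (snd \<omega>) else (\<lambda>_. 0)) ` space (measure_pmf (pair_pmf (pmf_of_set (msg_space K L)) Qd))))
     (count_space ((\<lambda>\<omega>. Gprod K Kc L G (fst \<omega>)) ` space (measure_pmf (pair_pmf (pmf_of_set (msg_space K L)) Qd))))
     (\<lambda>\<omega>. restrict_msgs K L (fst \<omega>)) (\<lambda>\<omega>. \<lambda>n. if n < N then enc n (fst \<omega>) (snd \<omega>) else (\<lambda>_. 0))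
     (\<lambda>\<omega>. Gprod K Kc L G (fst \<omega>)) = 0"
      unfolding Xeq Zeq .
  qed
  then show ?thesis unfolding T_def by blast
qed

end
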